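(* Over profiles whose ballots are strict weak orders (ties allowed), let $f$ be a VCCR satisfying Downward Homogeneity, Coherent Defeat, and Positive Involvement in Defeat. Then $f(\mathbf P)\supseteq sc(\mathbf P)$ for every profile $\mathbf P$.
   Context: Profiles: $\mathbf P:V\to\mathcal W(X)$, $V$ nonempty finite set of voters, $X=X(\mathbf P)$ nonempty finite set of candidates (from fixed infinite sets), $\mathcal W(X)$ the strict weak orders on $X$ (ties allowed). "Ranks $x$ above $y$" means strictly. $\mathrm{Margin}_{\mathbf P}(x,y)$ = #voters with $x$ strictly above $y$ minus #voters with $y$ strictly above $x$. Majority path from $x_1$ to $x_n$: $(x_1,\dots,x_n)$ with all $\mathrm{Margin}_{\mathbf P}(x_i,x_{i+1})>0$; strength = minimum of these. VCCR: $f(\mathbf P)$ asymmetric relation on $X(\mathbf P)$. $(x,y)\in sc(\mathbf P)$ iff $\mathrm{Margin}_{\mathbf P}(x,y)>0$ exceeds the strength of every majority path from $y$ to $x$. Downward Homogeneity: $f(\mathbf P)\supseteq f(2\mathbf P)$ where $2\mathbf P$ replaces each voter by two copies. Coherent Defeat: $\mathrm{Margin}_{\mathbf P}(x,y)>0$ and no majority path from $y$ to $x$ imply $(x,y)\in f(\mathbf P)$. Positive Involvement in Defeat: if $(x,y)\notin f(\mathbf P)$ and $\mathbf P'$ adds one new voter whose ballot ranks $y$ strictly above $x$, then $(x,y)\notin f(\mathbf P')$. *)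

theory Defs
  imports Main
begin

text \<open>Ballots of non-voters are
  fixed to be empty so that a profile is determined by its data on its voter set.\<close>

record ('v, 'c) profile =
  voters :: "'v set"
  cands  :: "'c set"
  ballot :: "'v \<Rightarrow> ('c \<times> 'c) set"

definition strict_weak_order :: "'c set \<Rightarrow> ('c \<times> 'c) set \<Rightarrow> bool" where
  "strict_weak_order X R \<longleftrightarrow>
     R \<subseteq> X \<times> X \<and>
     (\<forall>x y. (x, y) \<in> R \<longrightarrow> (y, x) \<notin> R) \<and>
     (\<forall>x y z. (x, y) \<in> R \<longrightarrow> (y, z) \<in> R \<longrightarrow> (x, z) \<in> R) \<and>
     (\<forall>x\<in>X. \<forall>y\<in>X. \<forall>z\<in>X. (x, y) \<in> R \<longrightarrow> (x, z) \<in> R \<or> (z, y) \<in> R)"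

definition is_profile :: "('v, 'c) profile \<Rightarrow> bool" where
  "is_profile P \<longleftrightarrow>
     finite (voters P) \<and> voters P \<noteq> {} \<and>
     finite (cands P) \<and> cands P \<noteq> {} \<and>
     (\<forall>i\<in>voters P. strict_weak_order (cands P) (ballot P i)) \<and>
     (\<forall>i. i \<notin> voters P \<longrightarrow> ballot P i = {})"

definition margin :: "('v, 'c) profile \<Rightarrow> 'c \<Rightarrow> 'c \<Rightarrow> int" where
  "margin P x y =
     int (card {i \<in> voters P. (x, y) \<in> ballot P i}) - int (card {i \<in> voters P. (y, x) \<in> ballot P i})"

definition majority_path :: "('v, 'c) profile \<Rightarrow> 'c list \<Rightarrow> bool" where
  "majority_path P xs \<longleftrightarrow>
     length xs \<ge> 2 \<and> (\<forall>i. Suc i < length xs \<longrightarrow> margin P (xs ! i) (xs ! Suc i) > 0)"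

definition majority_path_from_to :: "('v, 'c) profile \<Rightarrow> 'c list \<Rightarrow> 'c \<Rightarrow> 'c \<Rightarrow> bool" where
  "majority_path_from_to P xs a b \<longleftrightarrow> majority_path P xs \<and> hd xs = a \<and> last xs = b"

definition strength :: "('v, 'c) profile \<Rightarrow> 'c list \<Rightarrow> int" where
  "strength P xs = Min {margin P (xs ! i) (xs ! Suc i) | i. Suc i < length xs}"

definition sc :: "('v, 'c) profile \<Rightarrow> ('c \<times> 'c) set" where
  "sc P = {(x, y). x \<in> cands P \<and> y \<in> cands P \<and> margin P x y > 0 \<and>
     (\<forall>xs. majority_path_from_to P xs y x \<longrightarrow> margin P x y > strength P xs)}"

definition vccr :: "(('v, 'c) profile \<Rightarrow> ('c \<times> 'c) set) \<Rightarrow> bool" where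
  "vccr f \<longleftrightarrow> (\<forall>P. is_profile P \<longrightarrow>
     f P \<subseteq> cands P \<times> cands P \<and> (\<forall>x y. (x, y) \<in> f P \<longrightarrow> (y, x) \<notin> f P))"

text \<open>\<open>Q\<close> is a copy of \<open>2P\<close>: each voter of \<open>P\<close> is replaced by exactly two voters with the same ballot.\<close>
definition doubling :: "('v, 'c) profile \<Rightarrow> ('v, 'c) profile \<Rightarrow> bool" where
  "doubling P Q \<longleftrightarrow> cands Q = cands P \<and>
     (\<exists>\<pi>. \<pi> ` voters Q = voters P \<and>
          (\<forall>i\<in>voters P. card {j \<in> voters Q. \<pi> j = i} = 2) \<and>
          (\<forall>j\<in>voters Q. ballot Q j = ballot P (\<pi> j)))"

definition downward_homogeneity :: "(('v, 'c) profile \<Rightarrow> ('c \<times> 'c) set) \<Rightarrow> bool" where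
  "downward_homogeneity f \<longleftrightarrow>
     (\<forall>P Q. is_profile P \<longrightarrow> is_profile Q \<longrightarrow> doubling P Q \<longrightarrow> f Q \<subseteq> f P)"

definition coherent_defeat :: "(('v, 'c) profile \<Rightarrow> ('c \<times> 'c) set) \<Rightarrow> bool" where
  "coherent_defeat f \<longleftrightarrow>
     (\<forall>P x y. is_profile P \<longrightarrow> margin P x y > 0 \<longrightarrow>
        \<not> (\<exists>xs. majority_path_from_to P xs y x) \<longrightarrow> (x, y) \<in> f P)"

definition adds_voter :: "('v, 'c) profile \<Rightarrow> ('v, 'c) profile \<Rightarrow> 'v \<Rightarrow> bool" where
  "adds_voter P P' i \<longleftrightarrow> i \<notin> voters P \<and> voters P' = insert i (voters P) \<and>
     cands P' = cands P \<and> (\<forall>j\<in>voters P. ballot P' j = ballot P j)"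

definition positive_involvement_in_defeat :: "(('v, 'c) profile \<Rightarrow> ('c \<times> 'c) set) \<Rightarrow> bool" where
  "positive_involvement_in_defeat f \<longleftrightarrow>
     (\<forall>P P' i x y. is_profile P \<longrightarrow> is_profile P' \<longrightarrow> (x, y) \<notin> f P \<longrightarrow>
        adds_voter P P' i \<longrightarrow> (y, x) \<in> ballot P' i \<longrightarrow> (x, y) \<notin> f P')"

end

theory Submission
  imports Defs
begin

lemma trancl_list:
  assumes "(a, b) \<in> R\<^sup>+"
  shows "\<exists>xs. length xs \<ge> 2 \<and> hd xs = a \<and> last xs = b \<and>
     (\<forall>i. Suc i < length xs \<longrightarrow> (xs ! i, xs ! Suc i) \<in> R)"
  using assms
proof (induction rule: trancl_induct)
  case (base y)
  then show ?case by (intro exI[of _ "[a, y]"]) (auto simp: less_Suc_eq)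
next
  case (step y z)
  then obtain xs where xs: "length xs \<ge> 2" "hd xs = a" "last xs = y"
    "\<forall>i. Suc i < length xs \<longrightarrow> (xs ! i, xs ! Suc i) \<in> R" by blast
  have "\<forall>i. Suc i < length (xs @ [z]) \<longrightarrow> ((xs @ [z]) ! i, (xs @ [z]) ! Suc i) \<in> R"
  proof (intro allI impI)
    fix i assume i: "Suc i < length (xs @ [z])"
    show "((xs @ [z]) ! i, (xs @ [z]) ! Suc i) \<in> R"
    proof (cases "Suc i < length xs")
      case True then show ?thesis using xs(4) by (simp add: nth_append)
    next
      case False
      then have "Suc i = length xs" using i by simp
      moreover have "xs \<noteq> []" using xs(1) by auto
      then have "xs ! (length xs - 1) = y" using xs(3) by (simp add: last_conv_nth)
      ultimately have "xs ! i = y" by (metis diff_Suc_1)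
      then show ?thesis using step(2) \<open>Suc i = length xs\<close> by (simp add: nth_append)
    qed
  qed
  moreover have "xs \<noteq> []" using xs(1) by auto
  ultimately show ?case using xs by (intro exI[of _ "xs @ [z]"]) auto
qed

lemma exit_index:
  assumes "xs \<noteq> []" "hd xs \<in> D" "last xs \<notin> D"
  shows "\<exists>i. Suc i < length xs \<and> xs ! i \<in> D \<and> xs ! Suc i \<notin> D"
  using assms
proof (induction xs)
  case Nil then show ?case by simp
next
  case (Cons a ys)
  show ?case
  proof (cases "ys = []")
    case True then show ?thesis using Cons by simp
  next
    case False
    show ?thesis
    proof (cases "hd ys \<in> D")
      case True
      then obtain i where "Suc i < length ys" "ys ! i \<in> D" "ys ! Suc i \<notin> D"
        using Cons False by auto
      then show ?thesis by (intro exI[of _ "Suc i"]) auto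
    next
      case nD: False
      then show ?thesis using Cons False by (intro exI[of _ 0]) (auto simp: hd_conv_nth)
    qed
  qed
qed

lemma margin_anti: "margin P y x = - margin P x y"
  unfolding margin_def by simp

lemma margin_cands:
  assumes "is_profile P" "margin P a b \<noteq> 0"
  shows "a \<in> cands P \<and> b \<in> cands P"
proof (rule ccontr)
  assume "\<not> ?thesis"
  then have "\<forall>i\<in>voters P. (a, b) \<notin> ballot P i \<and> (b, a) \<notin> ballot P i"
    using assms(1) unfolding is_profile_def strict_weak_order_def by blast
  then have "{i \<in> voters P. (a, b) \<in> ballot P i} = {}" "{i \<in> voters P. (b, a) \<in> ballot P i} = {}"
    by auto
  then have "margin P a b = 0" unfolding margin_def by (simp only: card.empty)
  then show False using assms(2) by simp
qed


lemma key:
  fixes f :: "('v, 'c) profile \<Rightarrow> ('c \<times> 'c) set" and P :: "('v, 'c) profile"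
  assumes infV: "infinite (UNIV :: 'v set)"
    and CD: "coherent_defeat f"
    and PI: "positive_involvement_in_defeat f"
    and prof: "is_profile P"
    and xy: "(x, y) \<in> sc P"
  shows "(x, y) \<in> f P"
proof -
  let ?X = "cands P"
  have xX: "x \<in> ?X" and yX: "y \<in> ?X" and kpos: "margin P x y > 0"
    and sp: "\<And>xs. majority_path_from_to P xs y x \<Longrightarrow> margin P x y > strength P xs"
    using xy unfolding sc_def by auto
  define k where "k = margin P x y"
  define S where "S = {(a, b). margin P a b \<ge> k}"
  define D where "D = {c. (y, c) \<in> S\<^sup>*}"
  have yD: "y \<in> D" unfolding D_def by simp
  have xy_ne: "x \<noteq> y" using kpos unfolding margin_def by auto
  have xnD: "x \<notin> D"
  proof
    assume "x \<in> D"
    then have "(y, x) \<in> S\<^sup>+" using xy_ne unfolding D_def by (auto simp: rtrancl_eq_or_trancl)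
    then obtain xs where xs: "length xs \<ge> 2" "hd xs = y" "last xs = x"
      "\<forall>i. Suc i < length xs \<longrightarrow> (xs ! i, xs ! Suc i) \<in> S"
      using trancl_list by metis
    have mk: "\<forall>i. Suc i < length xs \<longrightarrow> margin P (xs ! i) (xs ! Suc i) \<ge> k"
      using xs(4) unfolding S_def by auto
    then have "majority_path_from_to P xs y x"
      using xs kpos unfolding majority_path_from_to_def majority_path_def k_def by force
    then have lt: "k > strength P xs" using sp k_def by auto
    have fin: "finite {margin P (xs ! i) (xs ! Suc i) | i. Suc i < length xs}"
    proof -
      have "finite {i::nat. Suc i < length xs}"
        by (rule finite_subset[of _ "{..<length xs}"]) auto
      then show ?thesis by (rule finite_image_set)
    qed
    have ne: "{margin P (xs ! i) (xs ! Suc i) | i. Suc i < length xs} \<noteq> {}"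
      using xs(1) by (auto intro!: exI[of _ 0])
    have "strength P xs \<ge> k"
      unfolding strength_def using fin ne mk by (auto simp: Min_ge_iff)
    then show False using lt by simp
  qed
  define r :: "'c \<Rightarrow> nat" where
    "r c = (if c \<in> D - {y} then 0 else if c = x then 1 else if c = y then 2 else 3)" for c
  define B where "B = {(a, b). a \<in> ?X \<and> b \<in> ?X \<and> r a > r b}"
  have swoB: "strict_weak_order ?X B"
    unfolding strict_weak_order_def B_def by auto
  have yxB: "(y, x) \<in> B" using xX yX xnD yD xy_ne unfolding B_def r_def by auto
  have "infinite (UNIV - voters P)" using infV prof unfolding is_profile_def by auto
  then obtain v :: "nat \<Rightarrow> 'v" where injv: "inj v" and rv: "range v \<subseteq> UNIV - voters P"
    using infinite_countable_subset by blast
  define Q where "Q j = P\<lparr>voters := voters P \<union> v ` {..<j},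
     ballot := (\<lambda>i. if i \<in> v ` {..<j} then B else ballot P i)\<rparr>" for j
  have Q0: "Q 0 = P" unfolding Q_def by simp
  have margQ: "margin (Q j) a b = margin P a b +
     int j * ((if (a, b) \<in> B then 1 else 0) - (if (b, a) \<in> B then 1 else 0))" for j a b
  proof -
    have cnt: "card {i \<in> voters (Q j). (a, b) \<in> ballot (Q j) i} =
       card {i \<in> voters P. (a, b) \<in> ballot P i} + (if (a, b) \<in> B then j else 0)" for a b
    proof -
      have "{i \<in> voters (Q j). (a, b) \<in> ballot (Q j) i} =
         {i \<in> voters P. (a, b) \<in> ballot P i} \<union> (if (a, b) \<in> B then v ` {..<j} else {})"
        using rv unfolding Q_def by auto
      moreover have "{i \<in> voters P. (a, b) \<in> ballot P i} \<inter> v ` {..<j} = {}" using rv by auto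
      moreover have "finite {i \<in> voters P. (a, b) \<in> ballot P i}" using prof
        unfolding is_profile_def by auto
      moreover have "card (v ` {..<j}) = j" using injv by (simp add: card_image inj_on_subset)
      ultimately show ?thesis by (simp add: card_Un_disjoint)
    qed
    show ?thesis unfolding margin_def cnt by auto
  qed
  have profQ: "is_profile (Q j)" for j
    using prof swoB rv unfolding is_profile_def Q_def by auto
  have addQ: "adds_voter (Q j) (Q (Suc j)) (v j)" for j
    using rv injv unfolding adds_voter_def Q_def
    by (auto simp: lessThan_Suc inj_eq)
  have balQ: "ballot (Q (Suc j)) (v j) = B" for j
    unfolding Q_def by auto
  define m where "m = nat (k - 1)"
  have mk: "int m = k - 1" using kpos k_def m_def by simp
  have xyB: "(x, y) \<notin> B" using yxB unfolding B_def by auto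
  have top: "(x, y) \<in> f (Q m)"
  proof -
    have "margin (Q m) x y > 0" using margQ[of m x y] xyB yxB mk k_def by simp
    moreover have "\<not> (\<exists>xs. majority_path_from_to (Q m) xs y x)"
    proof
      assume "\<exists>xs. majority_path_from_to (Q m) xs y x"
      then obtain xs where xs: "majority_path_from_to (Q m) xs y x" by blast
      then have "xs \<noteq> []" "hd xs \<in> D" "last xs \<notin> D"
        using yD xnD unfolding majority_path_from_to_def majority_path_def by auto
      then obtain i where i: "Suc i < length xs" "xs ! i \<in> D" "xs ! Suc i \<notin> D"
        using exit_index by metis
      define a where "a = xs ! i"
      define b where "b = xs ! Suc i"
      have pos: "margin (Q m) a b > 0"
        using xs i unfolding majority_path_from_to_def majority_path_def a_def b_def by auto
      have aD: "a \<in> D" and bD: "b \<notin> D" using i a_def b_def by auto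
      have "margin (Q m) a b \<le> 0"
      proof (cases "b \<in> ?X")
        case False
        then have "margin P a b = 0" using margin_cands[OF prof, of a b] by auto
        moreover have "(a, b) \<notin> B" "(b, a) \<notin> B" using False unfolding B_def by auto
        ultimately show ?thesis using margQ[of m a b] by simp
      next
        case bX: True
        have aX: "a \<in> ?X"
        proof (cases "a = y")
          case True then show ?thesis using yX by simp
        next
          case False
          then have "(y, a) \<in> S\<^sup>+" using aD unfolding D_def by (auto simp: rtrancl_eq_or_trancl)
          then obtain c where "(c, a) \<in> S" by (meson tranclE)
          then have "margin P c a \<noteq> 0" using kpos k_def unfolding S_def by auto
          then show ?thesis using margin_cands[OF prof] by blast
        qed
        show ?thesis
        proof (cases "a = y \<and> b = x")
          case True
          then show ?thesis using margQ[of m y x] yxB xyB mk k_def margin_anti[of P x y] by simp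
        next
          case False
          have "(b, a) \<in> B" using aX bX aD bD False yD unfolding B_def r_def by auto
          then have "(a, b) \<notin> B" unfolding B_def by auto
          moreover have "margin P a b < k"
          proof (rule ccontr)
            assume "\<not> margin P a b < k"
            then have "(a, b) \<in> S" unfolding S_def by auto
            then have "b \<in> D" using aD unfolding D_def by (meson mem_Collect_eq rtrancl.rtrancl_into_rtrancl)
            then show False using bD by simp
          qed
          ultimately show ?thesis using margQ[of m a b] \<open>(b, a) \<in> B\<close> mk by simp
        qed
      qed
      then show False using pos by simp
    qed
    ultimately show ?thesis using CD profQ[of m] unfolding coherent_defeat_def by blast
  qed
  have "(x, y) \<in> f (Q 0)"
  proof (rule inc_induct[of 0 m])
    show "0 \<le> m" by simp
    show "(x, y) \<in> f (Q m)" by (rule top)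
  next
    fix n assume "(x, y) \<in> f (Q (Suc n))"
    then show "(x, y) \<in> f (Q n)"
      using PI profQ[of n] profQ[of "Suc n"] addQ[of n] balQ[of n] yxB
      unfolding positive_involvement_in_defeat_def by blast
  qed
  then show ?thesis using Q0 by simp
qed

theorem theorem7p8:
  fixes f :: "('v, 'c) profile \<Rightarrow> ('c \<times> 'c) set"
  assumes "infinite (UNIV :: 'v set)"
    and "infinite (UNIV :: 'c set)"
    and "vccr f"
    and "downward_homogeneity f"
    and "coherent_defeat f"
    and "positive_involvement_in_defeat f"
  shows "\<forall>P. is_profile P \<longrightarrow> sc P \<subseteq> f P"
  using key[OF assms(1) assms(5) assms(6)] by auto

end
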